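(* Let $G$ be a metabelian group, i.e. $[[x,y],z]=1$ for all $x,y,z\in G$, where $[a,b]=a^{-1}b^{-1}ab$. Then for every real Banach space $E$, Jensen's functional equation $f(xy)+f(xy^{-1})=2f(x)$ is stable for the pair $(G;E)$: for every function $f\colon G\to E$ for which there is $c>0$ with $\|f(xy)+f(xy^{-1})-2f(x)\|\le c$ for all $x,y\in G$, there exists a function $j\colon G\to E$ satisfying $j(xy)+j(xy^{-1})=2j(x)$ for all $x,y\in G$ such that $j-f$ is bounded on $G$.
   Context: Groups are written multiplicatively with identity $1$. *)

theory Defs
  imports "HOL-Analysis.Analysis" "HOL-Algebra.Group"
begin

definition grp_comm :: "('a, 'b) monoid_scheme \<Rightarrow> 'a \<Rightarrow> 'a \<Rightarrow> 'a" where
  "grp_comm G a b = inv\<^bsub>G\<^esub> a \<otimes>\<^bsub>G\<^esub> inv\<^bsub>G\<^esub> b \<otimes>\<^bsub>G\<^esub> a \<otimes>\<^bsub>G\<^esub> b"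

definition metabelian_grp :: "('a, 'b) monoid_scheme \<Rightarrow> bool" where
  "metabelian_grp G \<longleftrightarrow> (\<forall>x\<in>carrier G. \<forall>y\<in>carrier G. \<forall>z\<in>carrier G.
      grp_comm G (grp_comm G x y) z = \<one>\<^bsub>G\<^esub>)"

end

theory Submission imports Defs begin

context group begin
lemma linv_assoc[simp]: "x \<in> carrier G \<Longrightarrow> y \<in> carrier G \<Longrightarrow> inv x \<otimes> (x \<otimes> y) = y"
  by (simp add: m_assoc[symmetric])
lemma rinv_assoc[simp]: "x \<in> carrier G \<Longrightarrow> y \<in> carrier G \<Longrightarrow> x \<otimes> (inv x \<otimes> y) = y"
  by (simp add: m_assoc[symmetric])
definition dd :: "'a \<Rightarrow> 'a \<Rightarrow> 'a" where
  "dd x y = x \<otimes> y \<otimes> inv x \<otimes> inv y"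
lemma dd_closed[simp]: "x \<in> carrier G \<Longrightarrow> y \<in> carrier G \<Longrightarrow> dd x y \<in> carrier G"
  by (simp add: dd_def)
lemma G1: "x \<in> carrier G \<Longrightarrow> y \<in> carrier G \<Longrightarrow> y \<otimes> x = dd y x \<otimes> (x \<otimes> y)"
  by (simp add: dd_def m_assoc)
lemma G3: "x \<in> carrier G \<Longrightarrow> y \<in> carrier G \<Longrightarrow> dd y x = inv (dd x y)"
  by (simp add: dd_def m_assoc inv_mult_group)

lemma comm_from_metab:
  assumes "metabelian_grp G" "x \<in> carrier G" "y \<in> carrier G" "z \<in> carrier G"
  shows "dd x y \<otimes> z = z \<otimes> dd x y"
proof -
  let ?w = "dd x y"
  have w: "?w \<in> carrier G" using assms by simp
  have e: "dd x y = grp_comm G (inv x) (inv y)"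
    using assms by (simp add: dd_def grp_comm_def)
  have "grp_comm G (grp_comm G (inv x) (inv y)) z = \<one>"
    using assms(1)[unfolded metabelian_grp_def, rule_format, OF inv_closed[OF assms(2)] inv_closed[OF assms(3)] assms(4)] .
  then have "grp_comm G (dd x y) z = \<one>" by (simp only: e)
  then have 1: "inv ?w \<otimes> (inv z \<otimes> (?w \<otimes> z)) = \<one>" using w assms by (simp add: grp_comm_def m_assoc)
  have "?w \<otimes> z = z \<otimes> ?w \<otimes> (inv ?w \<otimes> (inv z \<otimes> (?w \<otimes> z)))"
    using w assms by (simp add: m_assoc)
  also have "\<dots> = z \<otimes> ?w" using 1 w assms by simp
  finally show ?thesis .
qed

lemma G2:
  assumes "metabelian_grp G" "x \<in> carrier G" "y \<in> carrier G"
  shows "(x \<otimes> y) \<otimes> (x \<otimes> y) = dd y x \<otimes> ((x \<otimes> x) \<otimes> (y \<otimes> y))"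
proof -
  have "(x \<otimes> y) \<otimes> (x \<otimes> y) = x \<otimes> (y \<otimes> x) \<otimes> y" using assms by (simp add: m_assoc)
  also have "\<dots> = x \<otimes> dd y x \<otimes> (x \<otimes> y) \<otimes> y" using assms G1[of x y] by (simp add: m_assoc)
  also have "\<dots> = dd y x \<otimes> x \<otimes> (x \<otimes> y) \<otimes> y" using assms comm_from_metab[of y x x] by simp
  finally show ?thesis using assms by (simp add: m_assoc)
qed

lemma G4:
  assumes "metabelian_grp G" "x \<in> carrier G" "y \<in> carrier G"
  shows "dd (inv y) x = dd x y"
proof -
  have "y \<otimes> dd (inv y) x \<otimes> inv y = dd (inv y) x \<otimes> y \<otimes> inv y"
    using assms comm_from_metab[of "inv y" x y] by simp
  then have "dd (inv y) x = y \<otimes> dd (inv y) x \<otimes> inv y"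
    using assms by (simp add: m_assoc)
  also have "\<dots> = dd x y" using assms by (simp add: dd_def m_assoc)
  finally show ?thesis .
qed

lemma comm_sq:
  assumes "a \<in> carrier G" "x \<in> carrier G" "a \<otimes> x = x \<otimes> a"
  shows "(a \<otimes> x) \<otimes> (a \<otimes> x) = (a \<otimes> a) \<otimes> (x \<otimes> x)"
proof -
  have "(a \<otimes> x) \<otimes> (a \<otimes> x) = a \<otimes> (x \<otimes> a) \<otimes> x" using assms(1,2) by (simp add: m_assoc)
  also have "\<dots> = a \<otimes> (a \<otimes> x) \<otimes> x" by (simp only: assms(3))
  finally show ?thesis using assms(1,2) by (simp add: m_assoc)
qed

lemma comm_sq2:
  assumes "a \<in> carrier G" "x \<in> carrier G" "a \<otimes> x = x \<otimes> a"
  shows "(a \<otimes> a) \<otimes> (x \<otimes> x) = (x \<otimes> x) \<otimes> (a \<otimes> a)"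
proof -
  have "(a \<otimes> a) \<otimes> (x \<otimes> x) = (a \<otimes> x) \<otimes> (a \<otimes> x)" using comm_sq[OF assms, symmetric] .
  also have "\<dots> = (x \<otimes> a) \<otimes> (x \<otimes> a)" by (simp only: assms(3))
  also have "\<dots> = (x \<otimes> x) \<otimes> (a \<otimes> a)" using comm_sq[OF assms(2) assms(1) assms(3)[symmetric]] .
  finally show ?thesis .
qed

end

lemma scale_zero:
  fixes \<Phi> :: "'x \<Rightarrow> 'e::real_normed_vector"
  assumes cl: "\<And>a. P a \<Longrightarrow> P (sq a)"
    and bd: "\<And>a. P a \<Longrightarrow> norm (\<Phi> a) \<le> B"
    and sc: "\<And>a. P a \<Longrightarrow> \<Phi> (sq a) = 2 *\<^sub>R \<Phi> a"
    and Pa: "P a"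
  shows "\<Phi> a = 0"
proof -
  have ind: "\<forall>a. P a \<longrightarrow> 2^n * norm (\<Phi> a) \<le> B" for n
  proof (induction n)
    case 0 then show ?case using bd by simp
  next
    case (Suc n)
    show ?case
    proof (intro allI impI)
      fix a assume "P a"
      then have "2^n * norm (\<Phi> (sq a)) \<le> B" using Suc cl by blast
      moreover have "norm (\<Phi> (sq a)) = 2 * norm (\<Phi> a)" using sc[OF \<open>P a\<close>] by simp
      ultimately show "2^Suc n * norm (\<Phi> a) \<le> B" by (simp add: mult.assoc)
    qed
  qed
  show ?thesis
  proof (rule ccontr)
    assume "\<Phi> a \<noteq> 0"
    then have np: "norm (\<Phi> a) > 0" by simp
    obtain n where "B / norm (\<Phi> a) < (2::real)^n" using real_arch_pow[of 2 "B / norm (\<Phi> a)"] by auto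
    then have "B < 2^n * norm (\<Phi> a)" using np by (simp add: divide_less_eq)
    with ind[of n] Pa show False by auto
  qed
qed

lemma norm4: "norm (a + b + c - d) \<le> norm a + norm b + norm c + norm (d::'e::real_normed_vector)"
  using norm_triangle_ineq[of "a+b+c" "-d"] norm_triangle_ineq[of "a+b" c] norm_triangle_ineq[of a b]
  by simp

locale jctx = group G for G :: "('a, 'b) monoid_scheme" (structure) +
  fixes f :: "'a \<Rightarrow> 'e::banach" and c :: real
  assumes metab: "metabelian_grp G"
    and fJ: "\<forall>x\<in>carrier G. \<forall>y\<in>carrier G. norm (f (x \<otimes> y) + f (x \<otimes> inv y) - 2 *\<^sub>R f x) \<le> c"
begin

definition g :: "'a \<Rightarrow> 'e" where "g x = f x - f \<one>"

lemma g_one: "g \<one> = 0" by (simp add: g_def)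

lemma gJ: "x \<in> carrier G \<Longrightarrow> y \<in> carrier G \<Longrightarrow> norm (g (x \<otimes> y) + g (x \<otimes> inv y) - 2 *\<^sub>R g x) \<le> c"
proof -
  assume xy: "x \<in> carrier G" "y \<in> carrier G"
  have "g (x \<otimes> y) + g (x \<otimes> inv y) - 2 *\<^sub>R g x = f (x \<otimes> y) + f (x \<otimes> inv y) - 2 *\<^sub>R f x"
    by (simp add: g_def algebra_simps scaleR_2)
  then show ?thesis using fJ xy by simp
qed

lemma c_nonneg: "c \<ge> 0"
  using fJ by (meson norm_ge_zero one_closed order_trans)

lemma g_sq: "y \<in> carrier G \<Longrightarrow> norm (g (y \<otimes> y) - 2 *\<^sub>R g y) \<le> c"
  using gJ[of y y] by (simp add: g_one)

definition s :: "'a \<Rightarrow> nat \<Rightarrow> 'e" where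
  "s x n = inverse (2^n) *\<^sub>R g (x [^] ((2::nat)^n))"

lemma pow_Suc2: "x \<in> carrier G \<Longrightarrow> x [^] ((2::nat)^Suc n) = (x [^] ((2::nat)^n)) \<otimes> (x [^] ((2::nat)^n))"
proof -
  assume x: "x \<in> carrier G"
  have "(2::nat)^Suc n = 2^n + 2^n" by simp
  then show ?thesis using nat_pow_mult[OF x, of "2^n" "2^n"] by (simp add: mult_2)
qed

lemma s_diff: "x \<in> carrier G \<Longrightarrow> norm (s x (Suc n) - s x n) \<le> c * (1/2)^n"
proof -
  assume x: "x \<in> carrier G"
  define y where "y = x [^] ((2::nat)^n)"
  have y: "y \<in> carrier G" using x by (simp add: y_def)
  have "s x (Suc n) - s x n = inverse (2^Suc n) *\<^sub>R (g (y \<otimes> y) - 2 *\<^sub>R g y)"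
    using pow_Suc2[OF x, of n] by (simp add: s_def y_def algebra_simps)
  then have "norm (s x (Suc n) - s x n) = inverse (2^Suc n) * norm (g (y \<otimes> y) - 2 *\<^sub>R g y)"
    by simp
  also have "\<dots> \<le> inverse (2^Suc n) * c" using g_sq[OF y] by (intro mult_left_mono) auto
  also have "\<dots> \<le> c * (1/2)^n" using c_nonneg by (simp add: power_one_over field_simps)
  finally show ?thesis .
qed

definition hh :: "'a \<Rightarrow> 'e" where
  "hh x = g x + suminf (\<lambda>n. s x (Suc n) - s x n)"

lemma geo_summ: "summable (\<lambda>n. c * (1/2::real)^n)"
  by (intro summable_mult summable_geometric) simp

lemma geo_sum: "(\<Sum>n. c * (1/2::real)^n) = 2 * c"
  using suminf_mult[OF summable_geometric[of "1/2::real"], of c] suminf_geometric[of "1/2::real"]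
  by simp

lemma d_summ: "x \<in> carrier G \<Longrightarrow> summable (\<lambda>n. s x (Suc n) - s x n)"
  by (rule summable_comparison_test[OF _ geo_summ]) (auto intro: s_diff)

lemma s_lim: "x \<in> carrier G \<Longrightarrow> s x \<longlonglongrightarrow> hh x"
proof -
  assume x: "x \<in> carrier G"
  have s0: "s x 0 = g x" using x by (simp add: s_def)
  have "(\<lambda>n. s x 0 + (\<Sum>i<n. s x (Suc i) - s x i)) \<longlonglongrightarrow> s x 0 + suminf (\<lambda>n. s x (Suc n) - s x n)"
    by (intro tendsto_add tendsto_const summable_LIMSEQ d_summ x)
  then show ?thesis by (simp add: sum_lessThan_telescope hh_def s0)
qed

lemma hh_g: "x \<in> carrier G \<Longrightarrow> norm (hh x - g x) \<le> 2 * c"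
proof -
  assume x: "x \<in> carrier G"
  have "norm (suminf (\<lambda>n. s x (Suc n) - s x n)) \<le> (\<Sum>n. c * (1/2::real)^n)"
    by (rule norm_suminf_le[OF _ geo_summ]) (rule s_diff[OF x])
  then show ?thesis by (simp add: hh_def geo_sum)
qed

lemma hh_sq: "x \<in> carrier G \<Longrightarrow> hh (x \<otimes> x) = 2 *\<^sub>R hh x"
proof -
  assume x: "x \<in> carrier G"
  have e: "s (x \<otimes> x) n = 2 *\<^sub>R s x (Suc n)" for n
  proof -
    have "x \<otimes> x = x [^] (2::nat)" using x by (simp add: numeral_2_eq_2)
    then have "(x \<otimes> x) [^] ((2::nat)^n) = x [^] ((2::nat)^Suc n)"
      using x by (simp add: nat_pow_pow)
    then show ?thesis by (simp add: s_def)
  qed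
  have "s (x \<otimes> x) \<longlonglongrightarrow> hh (x \<otimes> x)" using x by (simp add: s_lim)
  moreover have "(\<lambda>n. 2 *\<^sub>R s x (Suc n)) \<longlonglongrightarrow> 2 *\<^sub>R hh x"
    by (intro tendsto_scaleR tendsto_const LIMSEQ_Suc s_lim x)
  ultimately show ?thesis using e LIMSEQ_unique by (metis (no_types, lifting) ext)
qed

lemma hh_one: "hh \<one> = 0"
  using hh_sq[of \<one>] by (simp add: scaleR_2)

definition C :: real where "C = 9 * c"

lemma hhJ: "x \<in> carrier G \<Longrightarrow> y \<in> carrier G \<Longrightarrow> norm (hh (x \<otimes> y) + hh (x \<otimes> inv y) - 2 *\<^sub>R hh x) \<le> C"
proof -
  assume xy: "x \<in> carrier G" "y \<in> carrier G"
  have "hh (x \<otimes> y) + hh (x \<otimes> inv y) - 2 *\<^sub>R hh x =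
     (g (x \<otimes> y) + g (x \<otimes> inv y) - 2 *\<^sub>R g x) + (hh (x \<otimes> y) - g (x \<otimes> y)) + (hh (x \<otimes> inv y) - g (x \<otimes> inv y))
       - 2 *\<^sub>R (hh x - g x)"
    by (simp add: algebra_simps)
  also have "norm \<dots> \<le> c + 2 * c + 2 * c + 2 * (2 * c)"
  proof -
    have "norm ((g (x \<otimes> y) + g (x \<otimes> inv y) - 2 *\<^sub>R g x) + (hh (x \<otimes> y) - g (x \<otimes> y)) + (hh (x \<otimes> inv y) - g (x \<otimes> inv y))
       - 2 *\<^sub>R (hh x - g x)) \<le> norm (g (x \<otimes> y) + g (x \<otimes> inv y) - 2 *\<^sub>R g x) + norm (hh (x \<otimes> y) - g (x \<otimes> y))
        + norm (hh (x \<otimes> inv y) - g (x \<otimes> inv y)) + norm (2 *\<^sub>R (hh x - g x))" by (rule norm4)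
    moreover have "norm (2 *\<^sub>R (hh x - g x)) \<le> 2 * (2 * c)" using hh_g[of x] xy by simp
    moreover have "norm (hh (x \<otimes> y) - g (x \<otimes> y)) \<le> 2 * c" using hh_g[of "x \<otimes> y"] xy by simp
    moreover have "norm (hh (x \<otimes> inv y) - g (x \<otimes> inv y)) \<le> 2 * c" using hh_g[of "x \<otimes> inv y"] xy by simp
    ultimately show ?thesis using gJ[OF xy] by linarith
  qed
  finally show ?thesis by (simp add: C_def)
qed

lemma hh_oddb: "y \<in> carrier G \<Longrightarrow> norm (hh y + hh (inv y)) \<le> C"
  using hhJ[of \<one> y] by (simp add: hh_one)

lemma hh_Sb: "x \<in> carrier G \<Longrightarrow> y \<in> carrier G \<Longrightarrow>
   norm (hh (x \<otimes> y) + hh (y \<otimes> x) - 2 *\<^sub>R hh x - 2 *\<^sub>R hh y) \<le> 3 * C"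
proof -
  assume xy: "x \<in> carrier G" "y \<in> carrier G"
  have i: "inv (x \<otimes> inv y) = y \<otimes> inv x" using xy by (simp add: inv_mult_group)
  have "hh (x \<otimes> y) + hh (y \<otimes> x) - 2 *\<^sub>R hh x - 2 *\<^sub>R hh y =
     (hh (x \<otimes> y) + hh (x \<otimes> inv y) - 2 *\<^sub>R hh x) + (hh (y \<otimes> x) + hh (y \<otimes> inv x) - 2 *\<^sub>R hh y)
     + 0 - (hh (x \<otimes> inv y) + hh (inv (x \<otimes> inv y)))"
    by (simp add: i algebra_simps)
  also have "norm \<dots> \<le> C + C + 0 + C"
  proof -
    have "norm ((hh (x \<otimes> y) + hh (x \<otimes> inv y) - 2 *\<^sub>R hh x) + (hh (y \<otimes> x) + hh (y \<otimes> inv x) - 2 *\<^sub>R hh y)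
     + 0 - (hh (x \<otimes> inv y) + hh (inv (x \<otimes> inv y)))) \<le> norm (hh (x \<otimes> y) + hh (x \<otimes> inv y) - 2 *\<^sub>R hh x)
      + norm (hh (y \<otimes> x) + hh (y \<otimes> inv x) - 2 *\<^sub>R hh y) + norm (0::'e) + norm (hh (x \<otimes> inv y) + hh (inv (x \<otimes> inv y)))"
      by (rule norm4)
    moreover have "norm (hh (x \<otimes> inv y) + hh (inv (x \<otimes> inv y))) \<le> C" using hh_oddb[of "x \<otimes> inv y"] xy by simp
    ultimately show ?thesis using hhJ[OF xy] hhJ[of y x] xy by simp
  qed
  finally show ?thesis by simp
qed

lemma hh_inv: "x \<in> carrier G \<Longrightarrow> hh (inv x) = - hh x"
proof -
  assume x: "x \<in> carrier G"
  have "(\<lambda>a. hh a + hh (inv a)) x = 0"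
  proof (rule scale_zero[where \<Phi> = "\<lambda>a. hh a + hh (inv a)" and P = "\<lambda>a. a \<in> carrier G" and sq = "\<lambda>a. a \<otimes> a" and B = C])
    fix a assume a: "a \<in> carrier G"
    show "a \<otimes> a \<in> carrier G" using a by simp
    show "norm (hh a + hh (inv a)) \<le> C" using hh_oddb a by simp
    have "inv (a \<otimes> a) = inv a \<otimes> inv a" using a by (simp add: inv_mult_group)
    then show "hh (a \<otimes> a) + hh (inv (a \<otimes> a)) = 2 *\<^sub>R (hh a + hh (inv a))"
      using a by (simp add: hh_sq scaleR_right_distrib)
  qed (rule x)
  then show ?thesis by (simp add: eq_neg_iff_add_eq_0 add.commute)
qed

lemma hh_comm: "a \<in> carrier G \<Longrightarrow> x \<in> carrier G \<Longrightarrow> a \<otimes> x = x \<otimes> a \<Longrightarrow> hh (a \<otimes> x) = hh a + hh x"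
proof -
  assume ax: "a \<in> carrier G" "x \<in> carrier G" "a \<otimes> x = x \<otimes> a"
  have "(\<lambda>p. hh (fst p \<otimes> snd p) - hh (fst p) - hh (snd p)) (a, x) = 0"
  proof (rule scale_zero[where \<Phi> = "\<lambda>p. hh (fst p \<otimes> snd p) - hh (fst p) - hh (snd p)" and P = "\<lambda>p. fst p \<in> carrier G \<and> snd p \<in> carrier G \<and> fst p \<otimes> snd p = snd p \<otimes> fst p"
        and sq = "\<lambda>p. (fst p \<otimes> fst p, snd p \<otimes> snd p)" and B = "3 * C / 2"])
    fix p :: "'a \<times> 'a"
    assume P: "fst p \<in> carrier G \<and> snd p \<in> carrier G \<and> fst p \<otimes> snd p = snd p \<otimes> fst p"
    obtain u v where p: "p = (u, v)" by (cases p)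
    have u: "u \<in> carrier G" and v: "v \<in> carrier G" and uv: "u \<otimes> v = v \<otimes> u" using P p by auto
    show "fst (fst p \<otimes> fst p, snd p \<otimes> snd p) \<in> carrier G \<and> snd (fst p \<otimes> fst p, snd p \<otimes> snd p) \<in> carrier G \<and>
      fst (fst p \<otimes> fst p, snd p \<otimes> snd p) \<otimes> snd (fst p \<otimes> fst p, snd p \<otimes> snd p) =
      snd (fst p \<otimes> fst p, snd p \<otimes> snd p) \<otimes> fst (fst p \<otimes> fst p, snd p \<otimes> snd p)"
      using p u v uv comm_sq2 by simp
    have "norm (hh (u \<otimes> v) + hh (v \<otimes> u) - 2 *\<^sub>R hh u - 2 *\<^sub>R hh v) \<le> 3 * C" using hh_Sb u v by simp
    moreover have "hh (u \<otimes> v) + hh (v \<otimes> u) - 2 *\<^sub>R hh u - 2 *\<^sub>R hh v = 2 *\<^sub>R (hh (u \<otimes> v) - hh u - hh v)"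
      using uv by (simp add: algebra_simps scaleR_2)
    ultimately show "norm (hh (fst p \<otimes> snd p) - hh (fst p) - hh (snd p)) \<le> 3 * C / 2" using p by simp
    have "hh ((u \<otimes> u) \<otimes> (v \<otimes> v)) = hh ((u \<otimes> v) \<otimes> (u \<otimes> v))"
      using comm_sq[OF u v uv] by simp
    also have "\<dots> = 2 *\<^sub>R hh (u \<otimes> v)" using hh_sq u v by simp
    finally have "hh ((u \<otimes> u) \<otimes> (v \<otimes> v)) = 2 *\<^sub>R hh (u \<otimes> v)" .
    then show "hh (fst (fst p \<otimes> fst p, snd p \<otimes> snd p) \<otimes> snd (fst p \<otimes> fst p, snd p \<otimes> snd p)) -
      hh (fst (fst p \<otimes> fst p, snd p \<otimes> snd p)) - hh (snd (fst p \<otimes> fst p, snd p \<otimes> snd p)) =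
      2 *\<^sub>R (hh (fst p \<otimes> snd p) - hh (fst p) - hh (snd p))"
      using p u v by (simp add: hh_sq algebra_simps)
  qed (use ax in simp)
  then show ?thesis by (simp add: diff_diff_eq)
qed

lemma hh_central: "a \<in> carrier G \<Longrightarrow> b \<in> carrier G \<Longrightarrow> x \<in> carrier G \<Longrightarrow> hh (dd a b \<otimes> x) = hh (dd a b) + hh x"
  by (rule hh_comm) (simp_all add: comm_from_metab[OF metab])

lemma hh_S: "x \<in> carrier G \<Longrightarrow> y \<in> carrier G \<Longrightarrow> hh (x \<otimes> y) + hh (y \<otimes> x) = 2 *\<^sub>R hh x + 2 *\<^sub>R hh y"
proof -
  assume xy: "x \<in> carrier G" "y \<in> carrier G"
  have "(\<lambda>p. hh (fst p \<otimes> snd p) + hh (snd p \<otimes> fst p) - 2 *\<^sub>R hh (fst p) - 2 *\<^sub>R hh (snd p)) (x, y) = 0"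
  proof (rule scale_zero[where \<Phi> = "\<lambda>p. hh (fst p \<otimes> snd p) + hh (snd p \<otimes> fst p) - 2 *\<^sub>R hh (fst p) - 2 *\<^sub>R hh (snd p)" and P = "\<lambda>p. fst p \<in> carrier G \<and> snd p \<in> carrier G"
        and sq = "\<lambda>p. (fst p \<otimes> fst p, snd p \<otimes> snd p)" and B = "3 * C"])
    fix p :: "'a \<times> 'a"
    assume P: "fst p \<in> carrier G \<and> snd p \<in> carrier G"
    obtain u v where p: "p = (u, v)" by (cases p)
    have u: "u \<in> carrier G" and v: "v \<in> carrier G" using P p by auto
    show "fst (fst p \<otimes> fst p, snd p \<otimes> snd p) \<in> carrier G \<and> snd (fst p \<otimes> fst p, snd p \<otimes> snd p) \<in> carrier G"
      using p u v by simp
    show "norm (hh (fst p \<otimes> snd p) + hh (snd p \<otimes> fst p) - 2 *\<^sub>R hh (fst p) - 2 *\<^sub>R hh (snd p)) \<le> 3 * C"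
      using hh_Sb u v p by simp
    have e1: "hh ((u \<otimes> v) \<otimes> (u \<otimes> v)) = hh (dd v u) + hh ((u \<otimes> u) \<otimes> (v \<otimes> v))"
      using G2[OF metab u v] hh_central u v by simp
    have e2: "hh ((v \<otimes> u) \<otimes> (v \<otimes> u)) = hh (dd u v) + hh ((v \<otimes> v) \<otimes> (u \<otimes> u))"
      using G2[OF metab v u] hh_central u v by simp
    have e3: "hh (dd v u) = - hh (dd u v)" using G3[OF u v] hh_inv u v by simp
    have "hh ((u \<otimes> u) \<otimes> (v \<otimes> v)) + hh ((v \<otimes> v) \<otimes> (u \<otimes> u)) = 2 *\<^sub>R (hh (u \<otimes> v) + hh (v \<otimes> u))"
      using e1 e2 e3 hh_sq u v by (simp add: algebra_simps)
    then show "hh (fst (fst p \<otimes> fst p, snd p \<otimes> snd p) \<otimes> snd (fst p \<otimes> fst p, snd p \<otimes> snd p)) +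
      hh (snd (fst p \<otimes> fst p, snd p \<otimes> snd p) \<otimes> fst (fst p \<otimes> fst p, snd p \<otimes> snd p)) -
      2 *\<^sub>R hh (fst (fst p \<otimes> fst p, snd p \<otimes> snd p)) - 2 *\<^sub>R hh (snd (fst p \<otimes> fst p, snd p \<otimes> snd p)) =
      2 *\<^sub>R (hh (fst p \<otimes> snd p) + hh (snd p \<otimes> fst p) - 2 *\<^sub>R hh (fst p) - 2 *\<^sub>R hh (snd p))"
      using p u v by (simp add: hh_sq algebra_simps)
  qed (use xy in simp)
  then show ?thesis by (simp add: algebra_simps)
qed

lemma hh_jensen: "x \<in> carrier G \<Longrightarrow> y \<in> carrier G \<Longrightarrow> hh (x \<otimes> y) + hh (x \<otimes> inv y) = 2 *\<^sub>R hh x"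
proof -
  assume x: "x \<in> carrier G" and y: "y \<in> carrier G"
  have iy: "inv y \<in> carrier G" using y by simp
  have a1: "hh (y \<otimes> x) = hh (dd y x) + hh (x \<otimes> y)" using G1[OF x y] hh_central x y by simp
  have a2: "hh (inv y \<otimes> x) = hh (dd (inv y) x) + hh (x \<otimes> inv y)" using G1[OF x iy] hh_central x iy by simp
  have a3: "hh (dd (inv y) x) = - hh (dd y x)"
    using G4[OF metab x y] G3[OF x y] hh_inv x y by simp
  have b1: "hh (x \<otimes> y) + hh (y \<otimes> x) = 2 *\<^sub>R hh x + 2 *\<^sub>R hh y" using hh_S x y by simp
  have b2: "hh (x \<otimes> inv y) + hh (inv y \<otimes> x) = 2 *\<^sub>R hh x - 2 *\<^sub>R hh y" using hh_S[OF x iy] hh_inv[OF y] by simp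
  have c1: "2 *\<^sub>R hh (x \<otimes> y) + hh (dd y x) = 2 *\<^sub>R hh x + 2 *\<^sub>R hh y"
    using a1 b1 by (simp add: scaleR_2 algebra_simps)
  have a2': "hh (inv y \<otimes> x) = hh (x \<otimes> inv y) - hh (dd y x)" using a2 a3 by simp
  have c2: "2 *\<^sub>R hh (x \<otimes> inv y) - hh (dd y x) = 2 *\<^sub>R hh x - 2 *\<^sub>R hh y"
    using b2 unfolding a2' by (simp add: scaleR_2 algebra_simps)
  have "(2 *\<^sub>R hh (x \<otimes> y) + hh (dd y x)) + (2 *\<^sub>R hh (x \<otimes> inv y) - hh (dd y x))
      = (2 *\<^sub>R hh x + 2 *\<^sub>R hh y) + (2 *\<^sub>R hh x - 2 *\<^sub>R hh y)"
    using c1 c2 by simp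
  then have "2 *\<^sub>R hh (x \<otimes> y) + 2 *\<^sub>R hh (x \<otimes> inv y) = 2 *\<^sub>R hh x + 2 *\<^sub>R hh x"
    by (simp add: algebra_simps)
  then have "2 *\<^sub>R (hh (x \<otimes> y) + hh (x \<otimes> inv y)) = 2 *\<^sub>R (2 *\<^sub>R hh x)"
    by (simp only: scaleR_right_distrib scaleR_2)
  then show ?thesis by (metis scaleR_cancel_left zero_neq_numeral)
qed

end

theorem theorem3p11:
  fixes G :: "('a, 'b) monoid_scheme" and f :: "'a \<Rightarrow> 'e::banach" and c :: real
  assumes "group G"
    and "metabelian_grp G"
    and "c > 0"
    and "\<forall>x\<in>carrier G. \<forall>y\<in>carrier G.
           norm (f (x \<otimes>\<^bsub>G\<^esub> y) + f (x \<otimes>\<^bsub>G\<^esub> inv\<^bsub>G\<^esub> y) - 2 *\<^sub>R f x) \<le> c"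
  shows "\<exists>j :: 'a \<Rightarrow> 'e.
           (\<forall>x\<in>carrier G. \<forall>y\<in>carrier G.
              j (x \<otimes>\<^bsub>G\<^esub> y) + j (x \<otimes>\<^bsub>G\<^esub> inv\<^bsub>G\<^esub> y) = 2 *\<^sub>R j x)
         \<and> (\<exists>B. \<forall>x\<in>carrier G. norm (j x - f x) \<le> B)"
proof -
  interpret J: jctx G f c
    using assms by (simp add: jctx_def jctx_axioms_def)
  let ?j = "\<lambda>x. J.hh x + f \<one>\<^bsub>G\<^esub>"
  have 1: "\<forall>x\<in>carrier G. \<forall>y\<in>carrier G. ?j (x \<otimes>\<^bsub>G\<^esub> y) + ?j (x \<otimes>\<^bsub>G\<^esub> inv\<^bsub>G\<^esub> y) = 2 *\<^sub>R ?j x"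
  proof (intro ballI)
    fix x y assume "x \<in> carrier G" "y \<in> carrier G"
    then have "J.hh (x \<otimes>\<^bsub>G\<^esub> y) + J.hh (x \<otimes>\<^bsub>G\<^esub> inv\<^bsub>G\<^esub> y) = 2 *\<^sub>R J.hh x" by (rule J.hh_jensen)
    then show "?j (x \<otimes>\<^bsub>G\<^esub> y) + ?j (x \<otimes>\<^bsub>G\<^esub> inv\<^bsub>G\<^esub> y) = 2 *\<^sub>R ?j x"
      by (simp add: algebra_simps scaleR_2)
  qed
  have 2: "\<forall>x\<in>carrier G. norm (?j x - f x) \<le> 2 * c"
  proof
    fix x assume "x \<in> carrier G"
    then have "norm (J.hh x - J.g x) \<le> 2 * c" by (rule J.hh_g)
    moreover have "J.hh x - J.g x = ?j x - f x" by (simp add: J.g_def)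
    ultimately show "norm (?j x - f x) \<le> 2 * c" by simp
  qed
  have 3: "\<exists>B. \<forall>x\<in>carrier G. norm (?j x - f x) \<le> B" using 2 by blast
  show ?thesis by (rule exI[where x = "?j"], rule conjI[OF 1 3])
qed

end
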